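(* Let $G$ be a flattened grammar and $\mathrm{CPS}(G)$ its CPS transformation (with respect to an arbitrary fixed choice of CPS-triggering nonterminals), and let $H$ be the grammar whose productions are those of $G$ together with those of $\mathrm{CPS}(G)$. Then for every $\lambda\in\Sigma^*$: (1) For every symbol $X$ of $G$, if $\hat X\Rightarrow^*\lambda$ in $\mathrm{CPS}(G)$ in $n$ steps, then $X\,\tau_X\Rightarrow^*\lambda$ in $H$ in $n$ steps. (2) For every dotted production $\Pi=X\to\alpha_1\cdots\alpha_{i-1}\cdot\alpha_i\cdots\alpha_r$ of $G$, if $\tau_\Pi\Rightarrow^*\lambda$ in $\mathrm{CPS}(G)$ in $n$ steps, then $\alpha_i\cdots\alpha_r\,\tau_X\Rightarrow^*\lambda$ in $H$ in $n$ steps.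
   Context: BNF grammars and flattening. A BNF grammar over terminals $\Sigma$ is a list of rules $X\to e$, where $X$ is a nonterminal (called top-level) and $e$ is an expression: a single symbol; a concatenation $e_1\cdots e_n$ ($n\ge 0$, the case $n=0$ being $\varepsilon$); an alternation $e_1\mid\cdots\mid e_n$; an optional $e_1?$; or a repetition $e_1^*$. The procedure $\mathrm{Flatten}(X,e)$ emits context-free productions: (i) if $e=\alpha$ is a single symbol, emit $X\to\alpha$; (ii) if $e=e_1\cdots e_n$, for each $i$ let $\alpha_i=e_i$ if $e_i$ is a single symbol, and otherwise let $\alpha_i$ be a fresh nonterminal and call $\mathrm{Flatten}(\alpha_i,e_i)$; emit $X\to\alpha_1\cdots\alpha_n$; (iii) if $e=e_1\mid\cdots\mid e_n$, call $\mathrm{Flatten}(X,e_i)$ for each $i$; (iv) if $e=e_1?$, call $\mathrm{Flatten}(X,e_1\mid\varepsilon)$; (v) if $e=e_1^*$, let $\alpha$ be fresh, call $\mathrm{Flatten}(\alpha,e_1)$ and emit $X\to\alpha X$ and $X\to\varepsilon$. The flattened grammar $G$ consists of all productions emitted by $\mathrm{Flatten}(X,e)$ over all rules $X\to e$; its start symbol $S$ is a top-level nonterminal. CPS transformation. A nonterminal is CPS-eligible if it was created as a fresh symbol during flattening. Fix an arbitrary subset of the CPS-eligible nonterminals, called CPS-triggering (terminals and top-level nonterminals are never CPS-triggering). For every nonterminal $Y$ let $\hat Y$ be a new symbol; for a terminal $\sigma$ set $\hat\sigma=\sigma$. Define mutually recursive procedures. $\mathrm{CPSProd}(X\to\alpha_1\cdots\alpha_i\cdot\alpha_{i+1}\cdots\alpha_r,\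 \tau)$, where $\tau$ is a string of symbols: if $i=0$, add the production $\hat X\to\tau$ to $\mathrm{CPS}(G)$; if $i>0$ and $\alpha_i$ is not CPS-triggering, call $\mathrm{CPSProd}(X\to\alpha_1\cdots\alpha_{i-1}\cdot\alpha_i\cdots\alpha_r,\ \hat\alpha_i\tau)$; if $i>0$, $\alpha_i$ is CPS-triggering, $i=r$ and $X=\alpha_r$ (i.e. the dotted production has the form $\alpha\to\gamma\alpha\,\cdot$), call $\mathrm{CPSProd}(X\to\alpha_1\cdots\alpha_{r-1}\cdot\alpha_r,\ \hat\alpha_r)$; otherwise ($\alpha_i$ CPS-triggering, not of that form) call $\mathrm{CPSSym}(\alpha_i,\tau)$ and then $\mathrm{CPSProd}(X\to\alpha_1\cdots\alpha_{i-1}\cdot\alpha_i\cdots\alpha_r,\ \hat\alpha_i)$. $\mathrm{CPSSym}(X,\tau)$: for each production $X\to\eta$ of $G$, call $\mathrm{CPSProd}(X\to\eta\,\cdot,\ \tau)$. The grammar $\mathrm{CPS}(G)$ consists of all productions added when $\mathrm{CPSSym}(X,\varepsilon)$ is called for every non-CPS-triggering nonterminal $X$; its start symbol is $\hat S$. Tail contexts. During this transformation $\mathrm{CPSSym}(X,\cdot)$ is invoked exactly once for each nonterminal $X$, and $\mathrm{CPSProd}(\Pi,\cdot)$ exactly once for each dotted production $\Pi$ of $G$. For a nonterminal $X$, $\tau_X$ denotes the second argument of that invocation of $\mathrm{CPSSym}(X,\cdot)$; for a terminal $X$, $\tau_X=\varepsilon$. For a dotted production $\Pi$, $\tau_\Pi$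 is the second argument of the invocation $\mathrm{CPSProd}(\Pi,\cdot)$. "$A\Rightarrow^* w$ in $n$ steps" means there is a derivation from $A$ to $w$ using exactly $n$ production applications. *)

theory Defs
  imports Main
begin

text \<open>Nonterminals are either top-level (names from the BNF grammar) or fresh
  (created during flattening, numbered by a counter).\<close>
datatype 'n nt = Top 'n | Fresh nat

text \<open>Symbols of the combined grammar H: terminals, nonterminals Y of G, and hatted
  nonterminals Y-hat.  For a terminal, its hat is the terminal itself.\<close>
datatype ('t,'n) sym = Tm 't | Nt "'n nt" | Hat "'n nt"

fun hat :: "('t,'n) sym \<Rightarrow> ('t,'n) sym" where
  "hat (Tm a) = Tm a"
| "hat (Nt Y) = Hat Y"
| "hat (Hat Y) = Hat Y"

datatype ('t,'n) bexp =
    BTm 't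
  | BNt 'n
  | Conc "('t,'n) bexp list"
  | Alt "('t,'n) bexp list"
  | Opt "('t,'n) bexp"
  | Star "('t,'n) bexp"

type_synonym ('t,'n) prod = "'n nt \<times> ('t,'n) sym list"

fun single_sym :: "('t,'n) bexp \<Rightarrow> ('t,'n) sym option" where
  "single_sym (BTm a) = Some (Tm a)"
| "single_sym (BNt A) = Some (Nt (Top A))"
| "single_sym _ = None"

text \<open>Flatten, threading a counter k that supplies fresh nonterminals Fresh k.
  The optional case e? is Flatten(X, e | epsilon), i.e. Flatten(X,e) followed by
  emitting X -> epsilon.\<close>
fun flat :: "'n nt \<Rightarrow> ('t,'n) bexp \<Rightarrow> nat \<Rightarrow> ('t,'n) prod list \<times> nat"
and flat_conc :: "('t,'n) bexp list \<Rightarrow> nat \<Rightarrow> ('t,'n) sym list \<times> ('t,'n) prod list \<times> nat"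
and flat_alt :: "'n nt \<Rightarrow> ('t,'n) bexp list \<Rightarrow> nat \<Rightarrow> ('t,'n) prod list \<times> nat"
where
  "flat X (BTm a) k = ([(X, [Tm a])], k)"
| "flat X (BNt A) k = ([(X, [Nt (Top A)])], k)"
| "flat X (Conc es) k = (case flat_conc es k of (as, ps, k') \<Rightarrow> (ps @ [(X, as)], k'))"
| "flat X (Alt es) k = flat_alt X es k"
| "flat X (Opt e) k = (case flat X e k of (ps, k') \<Rightarrow> (ps @ [(X, [])], k'))"
| "flat X (Star e) k =
     (case flat (Fresh k) e (Suc k) of (ps, k') \<Rightarrow>
        (ps @ [(X, [Nt (Fresh k), Nt X]), (X, [])], k'))"
| "flat_conc [] k = ([], [], k)"
| "flat_conc (e # es) k =
     (case single_sym e of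
        Some s \<Rightarrow> (case flat_conc es k of (as, ps, k') \<Rightarrow> (s # as, ps, k'))
      | None \<Rightarrow> (case flat (Fresh k) e (Suc k) of (ps1, k1) \<Rightarrow>
                 (case flat_conc es k1 of (as, ps2, k2) \<Rightarrow> (Nt (Fresh k) # as, ps1 @ ps2, k2))))"
| "flat_alt X [] k = ([], k)"
| "flat_alt X (e # es) k =
     (case flat X e k of (ps1, k1) \<Rightarrow> (case flat_alt X es k1 of (ps2, k2) \<Rightarrow> (ps1 @ ps2, k2)))"

fun flat_rules :: "('n \<times> ('t,'n) bexp) list \<Rightarrow> nat \<Rightarrow> ('t,'n) prod list \<times> nat" where
  "flat_rules [] k = ([], k)"
| "flat_rules ((A, e) # rs) k =
     (case flat (Top A) e k of (ps1, k1) \<Rightarrow> (case flat_rules rs k1 of (ps2, k2) \<Rightarrow> (ps1 @ ps2, k2)))"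

definition flat_grammar :: "('n \<times> ('t,'n) bexp) list \<Rightarrow> ('t,'n) prod set" where
  "flat_grammar rs = set (fst (flat_rules rs 0))"

definition syms :: "('t,'n) prod set \<Rightarrow> ('t,'n) sym set" where
  "syms G = {Nt X | X \<beta>. (X, \<beta>) \<in> G} \<union> {s | X \<beta> s. (X, \<beta>) \<in> G \<and> s \<in> set \<beta>}"

definition cps_eligible :: "('t,'n) prod set \<Rightarrow> 'n nt set" where
  "cps_eligible G = {Fresh k | k. Nt (Fresh k) \<in> syms G}"

definition is_trig :: "'n nt set \<Rightarrow> ('t,'n) sym \<Rightarrow> bool" where
  "is_trig trig s = (\<exists>Y. s = Nt Y \<and> Y \<in> trig)"

fun nt_of :: "('t,'n) sym \<Rightarrow> 'n nt" where
  "nt_of (Nt Y) = Y"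
| "nt_of (Hat Y) = Y"
| "nt_of (Tm a) = undefined"

text \<open>A dotted production (X, eta, i) is X -> eta with the dot after the first i
  symbols of eta.  The predicates cps_sym X tau / cps_prod Pi tau hold iff the
  transformation invokes CPSSym(X, tau) / CPSProd(Pi, tau), respectively.\<close>
inductive cps_sym :: "('t,'n) prod set \<Rightarrow> 'n nt set \<Rightarrow> 'n nt \<Rightarrow> ('t,'n) sym list \<Rightarrow> bool"
  and cps_prod :: "('t,'n) prod set \<Rightarrow> 'n nt set \<Rightarrow> 'n nt \<times> ('t,'n) sym list \<times> nat
                     \<Rightarrow> ('t,'n) sym list \<Rightarrow> bool"
  for G :: "('t,'n) prod set" and trig :: "'n nt set"
where
  root: "Nt X \<in> syms G \<Longrightarrow> X \<notin> trig \<Longrightarrow> cps_sym G trig X []"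
| sym_call: "cps_sym G trig X \<tau> \<Longrightarrow> (X, \<eta>) \<in> G \<Longrightarrow> cps_prod G trig (X, \<eta>, length \<eta>) \<tau>"
| nontrig: "cps_prod G trig (X, \<eta>, i) \<tau> \<Longrightarrow> 0 < i \<Longrightarrow> \<not> is_trig trig (\<eta> ! (i - 1))
            \<Longrightarrow> cps_prod G trig (X, \<eta>, i - 1) (hat (\<eta> ! (i - 1)) # \<tau>)"
| self: "cps_prod G trig (X, \<eta>, i) \<tau> \<Longrightarrow> 0 < i \<Longrightarrow> is_trig trig (\<eta> ! (i - 1))
            \<Longrightarrow> i = length \<eta> \<Longrightarrow> \<eta> ! (i - 1) = Nt X
            \<Longrightarrow> cps_prod G trig (X, \<eta>, i - 1) [Hat X]"
| trig_sym: "cps_prod G trig (X, \<eta>, i) \<tau> \<Longrightarrow> 0 < i \<Longrightarrow> is_trig trig (\<eta> ! (i - 1))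
            \<Longrightarrow> \<not> (i = length \<eta> \<and> \<eta> ! (i - 1) = Nt X)
            \<Longrightarrow> cps_sym G trig (nt_of (\<eta> ! (i - 1))) \<tau>"
| trig_prod: "cps_prod G trig (X, \<eta>, i) \<tau> \<Longrightarrow> 0 < i \<Longrightarrow> is_trig trig (\<eta> ! (i - 1))
            \<Longrightarrow> \<not> (i = length \<eta> \<and> \<eta> ! (i - 1) = Nt X)
            \<Longrightarrow> cps_prod G trig (X, \<eta>, i - 1) [hat (\<eta> ! (i - 1))]"

text \<open>CPS(G): productions X-hat -> tau added when CPSProd is called with i = 0.\<close>
definition CPS :: "('t,'n) prod set \<Rightarrow> 'n nt set \<Rightarrow> (('t,'n) sym \<times> ('t,'n) sym list) set" where
  "CPS G trig = {(Hat X, \<tau>) | X \<eta> \<tau>. cps_prod G trig (X, \<eta>, 0) \<tau>}"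

definition lift :: "('t,'n) prod set \<Rightarrow> (('t,'n) sym \<times> ('t,'n) sym list) set" where
  "lift G = {(Nt X, \<beta>) | X \<beta>. (X, \<beta>) \<in> G}"

definition Hgram :: "('t,'n) prod set \<Rightarrow> 'n nt set \<Rightarrow> (('t,'n) sym \<times> ('t,'n) sym list) set" where
  "Hgram G trig = lift G \<union> CPS G trig"

text \<open>Tail contexts (the argument of the unique invocation).\<close>
definition tau_sym :: "('t,'n) prod set \<Rightarrow> 'n nt set \<Rightarrow> ('t,'n) sym \<Rightarrow> ('t,'n) sym list" where
  "tau_sym G trig s = (case s of Nt X \<Rightarrow> (THE \<tau>. cps_sym G trig X \<tau>) | _ \<Rightarrow> [])"

definition tau_prod :: "('t,'n) prod set \<Rightarrow> 'n nt set \<Rightarrow> 'n nt \<times> ('t,'n) sym list \<times> nat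
                          \<Rightarrow> ('t,'n) sym list" where
  "tau_prod G trig \<Pi> = (THE \<tau>. cps_prod G trig \<Pi> \<tau>)"

definition derive1 :: "(('t,'n) sym \<times> ('t,'n) sym list) set
                       \<Rightarrow> ('t,'n) sym list \<Rightarrow> ('t,'n) sym list \<Rightarrow> bool" where
  "derive1 P u v = (\<exists>a A \<beta> b. u = a @ [A] @ b \<and> (A, \<beta>) \<in> P \<and> v = a @ \<beta> @ b)"

abbreviation derives_n :: "(('t,'n) sym \<times> ('t,'n) sym list) set \<Rightarrow> nat
                           \<Rightarrow> ('t,'n) sym list \<Rightarrow> ('t,'n) sym list \<Rightarrow> bool" where
  "derives_n P n u v \<equiv> (derive1 P ^^ n) u v"

end

theory Submission
  imports Defs
begin


lemma derive1_mono: "P \<subseteq> Q \<Longrightarrow> derives_n P n u v \<Longrightarrow> derives_n Q n u v"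
  by (rule relpowp_mono[of "derive1 P" "derive1 Q"]) (auto simp: derive1_def, blast)

lemma derive1_appR: "derive1 P u v \<Longrightarrow> derive1 P (u @ w) (v @ w)"
  unfolding derive1_def by (metis append.assoc)
lemma derive1_appL: "derive1 P u v \<Longrightarrow> derive1 P (w @ u) (w @ v)"
  unfolding derive1_def by (metis append.assoc)

lemma derives_appR: "derives_n P n u v \<Longrightarrow> derives_n P n (u @ w) (v @ w)"
  by (induction n arbitrary: v) (auto intro: derive1_appR)
lemma derives_appL: "derives_n P n u v \<Longrightarrow> derives_n P n (w @ u) (w @ v)"
  by (induction n arbitrary: v) (auto intro: derive1_appL)

lemma derives_append: "derives_n P n1 u1 v1 \<Longrightarrow> derives_n P n2 u2 v2
   \<Longrightarrow> derives_n P (n1 + n2) (u1 @ u2) (v1 @ v2)"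
  unfolding relpowp_add using derives_appR derives_appL by (metis relcompp.relcompI)

lemma derives_split: "derives_n P n (u1 @ u2) v \<Longrightarrow>
   \<exists>n1 n2 v1 v2. n = n1 + n2 \<and> v = v1 @ v2 \<and> derives_n P n1 u1 v1 \<and> derives_n P n2 u2 v2"
proof (induction n arbitrary: u1 u2)
  case 0
  then show ?case by auto
next
  case (Suc n)
  from relpowp_Suc_D2[OF Suc.prems] obtain x where
    s: "derive1 P (u1 @ u2) x" and r: "derives_n P n x v" by blast
  from s obtain a A \<beta> b where e: "u1 @ u2 = a @ [A] @ b" and p: "(A, \<beta>) \<in> P"
    and x: "x = a @ \<beta> @ b" unfolding derive1_def by blast
  from e[symmetric] obtain us where
    c: "(a = u1 @ us \<and> us @ [A] @ b = u2) \<or> (a @ us = u1 \<and> [A] @ b = us @ u2)"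
    unfolding append_eq_append_conv2 by blast
  show ?case
  proof (cases "(a = u1 @ us \<and> us @ [A] @ b = u2) \<or> (us = [] \<and> a = u1 \<and> [A] @ b = u2)")
    case True
    then obtain c where u2: "u2 = c @ [A] @ b" and a: "a = u1 @ c" by auto
    have "x = u1 @ (c @ \<beta> @ b)" using x a by simp
    from Suc.IH[OF r[unfolded this]] obtain n1 n2 v1 v2 where
      h: "n = n1 + n2" "v = v1 @ v2" "derives_n P n1 u1 v1" "derives_n P n2 (c @ \<beta> @ b) v2" by blast
    have "derive1 P u2 (c @ \<beta> @ b)" unfolding derive1_def u2 using p by blast
    with h show ?thesis by (metis add_Suc_right relpowp_Suc_I2)
  next
    case False
    with c obtain us' where u1: "u1 = a @ [A] @ us'" and b: "b = us' @ u2"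
      by (cases us) auto
    have "x = (a @ \<beta> @ us') @ u2" using x b by simp
    from Suc.IH[OF r[unfolded this]] obtain n1 n2 v1 v2 where
      h: "n = n1 + n2" "v = v1 @ v2" "derives_n P n1 (a @ \<beta> @ us') v1" "derives_n P n2 u2 v2" by blast
    have "derive1 P u1 (a @ \<beta> @ us')" unfolding derive1_def u1 using p by blast
    with h show ?thesis by (metis add_Suc relpowp_Suc_I2)
  qed
qed

lemma derives_split_Tm: "derives_n P n (u1 @ u2) (map Tm w) \<Longrightarrow>
   \<exists>n1 n2 w1 w2. n = n1 + n2 \<and> w = w1 @ w2 \<and> derives_n P n1 u1 (map Tm w1) \<and> derives_n P n2 u2 (map Tm w2)"
  by (drule derives_split) (auto simp: map_eq_append_conv)



definition OCC :: "('t,'n) prod set \<Rightarrow> nat \<Rightarrow> ('n nt \<times> ('t,'n) sym list \<times> nat) set" where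
  "OCC P j = {(X,\<eta>,i). (X,\<eta>) \<in> P \<and> i < length \<eta> \<and> \<eta>!i = Nt (Fresh j) \<and> \<not>(Suc i = length \<eta> \<and> X = Fresh j)}"

definition lok :: "'n nt \<Rightarrow> nat \<Rightarrow> bool" where
  "lok X j = (case X of Top _ \<Rightarrow> True | Fresh m \<Rightarrow> m < j)"

definition cpsstr :: "('t,'n) sym list \<Rightarrow> bool" where
  "cpsstr u = (\<forall>s \<in> set u. \<exists>a Y. s = Tm a \<or> s = Hat Y)"

lemma hat_cases: "(\<exists>a. hat s = Tm a) \<or> (\<exists>Y. hat s = Hat Y)" by (cases s) auto

lemma cpsstr_Cons: "cpsstr (hat s # \<tau>) = cpsstr \<tau>"
  by (cases s) (auto simp: cpsstr_def)
lemma cpsstr_Hat: "cpsstr [Hat X]" "cpsstr []" by (auto simp: cpsstr_def)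
lemma cpsstr_hat1: "cpsstr [hat s]" using cpsstr_Cons[of s "[]"] cpsstr_Hat by simp

lemma cps_str:
  "cps_sym G trig X \<tau> \<Longrightarrow> cpsstr \<tau>"
  "cps_prod G trig \<Pi> \<tau> \<Longrightarrow> cpsstr \<tau>"
  by (induction rule: cps_sym_cps_prod.inducts)
     (auto simp: cpsstr_Cons cpsstr_Hat cpsstr_hat1)

lemma cps_prod_G:
  "cps_sym G trig X \<tau> \<Longrightarrow> True"
  "cps_prod G trig \<Pi> \<tau> \<Longrightarrow> (fst \<Pi>, fst (snd \<Pi>)) \<in> G \<and> snd (snd \<Pi>) \<le> length (fst (snd \<Pi>))"
  by (induction rule: cps_sym_cps_prod.inducts) auto

lemma cps_prod_le: "cps_prod G trig (X,\<eta>,i) \<tau> \<Longrightarrow> i \<le> length \<eta>"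
  using cps_prod_G(2) by fastforce
lemma cps_prod_inG: "cps_prod G trig (X,\<eta>,i) \<tau> \<Longrightarrow> (X,\<eta>) \<in> G"
  using cps_prod_G(2) by fastforce

lemma cps_prod_sym:
  "cps_sym G trig X \<tau> \<Longrightarrow> True"
  "cps_prod G trig \<Pi> \<tau> \<Longrightarrow> \<exists>\<sigma>. cps_sym G trig (fst \<Pi>) \<sigma>"
  by (induction rule: cps_sym_cps_prod.inducts) auto

lemma cps_descend: "cps_prod G trig (X,\<eta>,i+d) \<tau> \<Longrightarrow> \<exists>\<tau>'. cps_prod G trig (X,\<eta>,i) \<tau>'"
proof (induction d arbitrary: \<tau>)
  case 0 then show ?case by auto
next
  case (Suc d)
  have p: "cps_prod G trig (X,\<eta>,Suc (i+d)) \<tau>" using Suc.prems by simp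
  have "\<exists>\<tau>'. cps_prod G trig (X,\<eta>,Suc (i+d) - 1) \<tau>'"
  proof (cases "is_trig trig (\<eta> ! (Suc (i+d) - 1))")
    case False
    from cps_sym_cps_prod.nontrig[OF p _ False] show ?thesis by blast
  next
    case True
    show ?thesis
    proof (cases "Suc (i + d) = length \<eta> \<and> \<eta> ! (Suc (i+d) - 1) = Nt X")
      case True2: True
      from cps_sym_cps_prod.self[OF p _ True] True2 show ?thesis by blast
    next
      case False
      from cps_sym_cps_prod.trig_prod[OF p _ True False] show ?thesis by blast
    qed
  qed
  then have "\<exists>\<tau>'. cps_prod G trig (X,\<eta>,i+d) \<tau>'" by simp
  then show ?case using Suc.IH by blast
qed

lemma pred_eq_iff: "0 < a \<Longrightarrow> 0 < b \<Longrightarrow> (a - Suc 0 = b - Suc 0) = (a = b)" by arith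

context
  fixes G :: "('t,'n) prod set" and trig :: "'n nt set"
  assumes uniqG: "\<And>j p q. p \<in> OCC G j \<Longrightarrow> q \<in> OCC G j \<Longrightarrow> p = q"
    and existG: "\<And>j. Nt (Fresh j) \<in> syms G \<Longrightarrow> \<exists>p \<in> OCC G j. lok (fst p) j"
    and trig_sub: "trig \<subseteq> cps_eligible G"
begin

lemma trig_fresh: "Y \<in> trig \<Longrightarrow> \<exists>j. Y = Fresh j"
  using trig_sub by (auto simp: cps_eligible_def)

lemma cps_sym_inv: "cps_sym G trig Y \<tau> \<Longrightarrow> Y \<in> trig \<Longrightarrow>
  \<exists>X \<eta> i. cps_prod G trig (X,\<eta>,i) \<tau> \<and> 0 < i \<and> \<eta>!(i-1) = Nt Y \<and> \<not>(i = length \<eta> \<and> \<eta>!(i-1) = Nt X)"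
  by (erule cps_sym.cases) (simp add: is_trig_def, metis is_trig_def nt.simps(1) nt_of.simps(1) sym.inject(2))

lemma cps_fun:
  "cps_sym G trig Y \<tau>1 \<Longrightarrow> (\<forall>\<tau>2. cps_sym G trig Y \<tau>2 \<longrightarrow> \<tau>1 = \<tau>2)"
  "cps_prod G trig \<Pi> \<tau>1 \<Longrightarrow> (\<forall>\<tau>2. cps_prod G trig \<Pi> \<tau>2 \<longrightarrow> \<tau>1 = \<tau>2)"
proof (induction rule: cps_sym_cps_prod.inducts)
  case (root X)
  show ?case
  proof (intro allI impI)
    fix \<tau>2 assume "cps_sym G trig X \<tau>2"
    then show "[] = \<tau>2"
    proof (cases rule: cps_sym.cases)
      case (trig_sym X' \<eta>' i')
      then show ?thesis using root by (auto simp: is_trig_def)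
    qed auto
  qed
next
  case (sym_call X \<tau> \<eta>)
  show ?case
  proof (intro allI impI)
    fix \<tau>2 assume "cps_prod G trig (X, \<eta>, length \<eta>) \<tau>2"
    then show "\<tau> = \<tau>2"
    proof (cases rule: cps_prod.cases)
      case (sym_call)
      then show ?thesis using \<open>\<forall>\<tau>2. cps_sym G trig X \<tau>2 \<longrightarrow> \<tau> = \<tau>2\<close> by auto
    qed (auto dest: cps_prod_le, metis diff_Suc_less length_greater_0_conv less_irrefl_nat)
  qed
next
  case (nontrig X \<eta> i \<tau>)
  show ?case
  proof (intro allI impI)
    fix \<tau>2 assume "cps_prod G trig (X, \<eta>, i - 1) \<tau>2"
    then show "hat (\<eta> ! (i - 1)) # \<tau> = \<tau>2"
    proof (cases rule: cps_prod.cases)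
      case sym_call
      then show ?thesis using nontrig cps_prod_G(2)[OF nontrig(1)] by auto
    next
      case (nontrig i' \<tau>')
      from nontrig(1) have e: "i' - 1 = i - 1" by simp
      from nontrig have "0 < i'" by simp
      with e \<open>0 < i\<close> have "i' = i" by arith
      then show ?thesis using nontrig \<open>\<forall>\<tau>2. cps_prod G trig (X, \<eta>, i) \<tau>2 \<longrightarrow> \<tau> = \<tau>2\<close> by auto
    next
      case (self i' \<tau>')
      from self(1) have e: "i' - 1 = i - 1" by simp
      from self have "0 < i'" by simp
      with e \<open>0 < i\<close> have "i' = i" by arith
      then show ?thesis using self nontrig by auto
    next
      case (trig_prod i' \<tau>')
      from trig_prod(1) have e: "i' - 1 = i - 1" by simp
      from trig_prod have "0 < i'" by simp
      with e \<open>0 < i\<close> have "i' = i" by arith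
      then show ?thesis using trig_prod nontrig by auto
    qed
  qed
next
  case (self X \<eta> i \<tau>)
  show ?case
  proof (intro allI impI)
    fix \<tau>2 assume "cps_prod G trig (X, \<eta>, i - 1) \<tau>2"
    then show "[Hat X] = \<tau>2"
    proof (cases rule: cps_prod.cases)
      case sym_call
      then show ?thesis using self cps_prod_G(2)[OF self(1)] by auto
    next
      case (nontrig i' \<tau>')
      from nontrig(1) have e: "i' - 1 = i - 1" by simp
      from nontrig have "0 < i'" by simp
      with e \<open>0 < i\<close> have "i' = i" by arith
      then show ?thesis using nontrig self by auto
    next
      case (self i' \<tau>')
      then show ?thesis by auto
    next
      case (trig_prod i' \<tau>')
      from trig_prod(1) have e: "i' - 1 = i - 1" by simp
      from trig_prod have "0 < i'" by simp
      with e \<open>0 < i\<close> have "i' = i" by arith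
      then show ?thesis using trig_prod self by auto
    qed
  qed
next
  case (trig_sym X \<eta> i \<tau>)
  have P: "cps_prod G trig (X, \<eta>, i) \<tau>" and IH: "\<forall>\<tau>2. cps_prod G trig (X, \<eta>, i) \<tau>2 \<longrightarrow> \<tau> = \<tau>2"
    and ipos: "0 < i" and tr: "is_trig trig (\<eta> ! (i - 1))"
    and ns: "\<not> (i = length \<eta> \<and> \<eta> ! (i - 1) = Nt X)" using trig_sym by blast+
  from tr obtain Y where Y: "\<eta> ! (i - 1) = Nt Y" "Y \<in> trig"
    by (auto simp: is_trig_def)
  then obtain j where j: "Y = Fresh j" using trig_fresh by blast
  show ?case
  proof (intro allI impI)
    fix \<tau>2 assume "cps_sym G trig (nt_of (\<eta> ! (i - 1))) \<tau>2"
    then have "cps_sym G trig Y \<tau>2" using Y by simp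
    from cps_sym_inv[OF this Y(2)] obtain X' \<eta>' i' where
      h: "cps_prod G trig (X',\<eta>',i') \<tau>2" "0 < i'" "\<eta>'!(i'-1) = Nt Y"
         "\<not>(i' = length \<eta>' \<and> \<eta>'!(i'-1) = Nt X')" by blast
    have G1: "(X, \<eta>) \<in> G" "i \<le> length \<eta>" using P by (auto dest: cps_prod_le cps_prod_inG)
    have G2: "(X', \<eta>') \<in> G" "i' \<le> length \<eta>'" using h(1) by (auto dest: cps_prod_le cps_prod_inG)
    have o1: "(X, \<eta>, i - 1) \<in> OCC G j"
      using G1 Y j ipos ns by (auto simp: OCC_def)
    have o2: "(X', \<eta>', i' - 1) \<in> OCC G j"
      using G2 h j by (auto simp: OCC_def)
    from uniqG[OF o1 o2] have e: "X' = X" "\<eta>' = \<eta>" "i' - 1 = i - 1" by auto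
    with ipos h(2) have "i' = i" by arith
    with e h(1) IH show "\<tau> = \<tau>2" by auto
  qed
next
  case (trig_prod X \<eta> i \<tau>)
  show ?case
  proof (intro allI impI)
    fix \<tau>2 assume "cps_prod G trig (X, \<eta>, i - 1) \<tau>2"
    then show "[hat (\<eta> ! (i - 1))] = \<tau>2"
    proof (cases rule: cps_prod.cases)
      case sym_call
      then show ?thesis using trig_prod cps_prod_G(2)[OF trig_prod(1)] by auto
    next
      case (nontrig i' \<tau>')
      from nontrig(1) have e: "i' - 1 = i - 1" by simp
      from nontrig have "0 < i'" by simp
      with e \<open>0 < i\<close> have "i' = i" by arith
      then show ?thesis using nontrig trig_prod by auto
    next
      case (self i' \<tau>')
      from self(1) have e: "i' - 1 = i - 1" by simp
      from self have "0 < i'" by simp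
      with e \<open>0 < i\<close> have "i' = i" by arith
      then show ?thesis using self trig_prod by auto
    next
      case (trig_prod i' \<tau>')
      from trig_prod(1) have e: "i' - 1 = i - 1" by simp
      from trig_prod have "0 < i'" by simp
      with e \<open>0 < i\<close> have "i' = i" by arith
      then show ?thesis using trig_prod by auto
    qed
  qed
qed


lemma ex_aux: "Nt (Fresh j) \<in> syms G \<Longrightarrow> \<exists>\<tau>. cps_sym G trig (Fresh j) \<tau>"
proof (induction j rule: less_induct)
  case (less j)
  show ?case
  proof (cases "Fresh j \<in> trig")
    case False
    then show ?thesis using less.prems cps_sym_cps_prod.root by blast
  next
    case True
    from existG[OF less.prems] obtain X' \<eta>' i where
      o: "(X',\<eta>',i) \<in> OCC G j" and l: "lok X' j" by auto
    from o have G': "(X',\<eta>') \<in> G" "i < length \<eta>'" "\<eta>'!i = Nt (Fresh j)"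
      "\<not>(Suc i = length \<eta>' \<and> X' = Fresh j)" by (auto simp: OCC_def)
    have sX': "Nt X' \<in> syms G" using G'(1) by (auto simp: syms_def)
    have "\<exists>\<sigma>. cps_sym G trig X' \<sigma>"
    proof (cases "X' \<in> trig")
      case False
      then show ?thesis using sX' cps_sym_cps_prod.root by blast
    next
      case True
      then obtain m where m: "X' = Fresh m" using trig_fresh by blast
      with l have "m < j" by (simp add: lok_def)
      with less.IH sX' m show ?thesis by blast
    qed
    then obtain \<sigma> where "cps_sym G trig X' \<sigma>" by blast
    from cps_sym_cps_prod.sym_call[OF this G'(1)]
    have "cps_prod G trig (X', \<eta>', Suc i + (length \<eta>' - Suc i)) \<sigma>" using G'(2)
      by (metis Suc_leI le_add_diff_inverse)
    from cps_descend[OF this] obtain \<tau>' where P: "cps_prod G trig (X', \<eta>', Suc i) \<tau>'" by blast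
    have tr: "is_trig trig (\<eta>' ! (Suc i - 1))" using G'(3) True by (simp add: is_trig_def)
    have ns: "\<not> (Suc i = length \<eta>' \<and> \<eta>' ! (Suc i - 1) = Nt X')" using G'(3,4) by auto
    from cps_sym_cps_prod.trig_sym[OF P _ tr ns] G'(3) show ?thesis by auto
  qed
qed

lemma sym_exists: "Nt X \<in> syms G \<Longrightarrow> \<exists>\<tau>. cps_sym G trig X \<tau>"
proof (cases "X \<in> trig")
  case True
  then obtain j where "X = Fresh j" using trig_fresh by blast
  then show "Nt X \<in> syms G \<Longrightarrow> ?thesis" using ex_aux by blast
qed (blast intro: cps_sym_cps_prod.root)

lemma tS_eq: "cps_sym G trig X \<tau> \<Longrightarrow> tau_sym G trig (Nt X) = \<tau>"
proof -
  assume c: "cps_sym G trig X \<tau>"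
  have "(THE \<tau>. cps_sym G trig X \<tau>) = \<tau>"
    by (rule the_equality[where P="cps_sym G trig X", OF c]) (use cps_fun(1)[OF c] in blast)
  then show ?thesis by (simp add: tau_sym_def)
qed

lemma tP_eq: "cps_prod G trig \<Pi> \<tau> \<Longrightarrow> tau_prod G trig \<Pi> = \<tau>"
proof -
  assume c: "cps_prod G trig \<Pi> \<tau>"
  show ?thesis unfolding tau_prod_def
    by (rule the_equality[where P="cps_prod G trig \<Pi>", OF c]) (use cps_fun(2)[OF c] in blast)
qed

lemma prod_exists: "(X,\<eta>) \<in> G \<Longrightarrow> j \<le> length \<eta> \<Longrightarrow> \<exists>\<tau>. cps_prod G trig (X,\<eta>,j) \<tau>"
proof -
  assume a: "(X,\<eta>) \<in> G" "j \<le> length \<eta>"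
  then have "Nt X \<in> syms G" by (auto simp: syms_def)
  from sym_exists[OF this] obtain \<sigma> where "cps_sym G trig X \<sigma>" by blast
  from cps_sym_cps_prod.sym_call[OF this a(1)]
  have "cps_prod G trig (X, \<eta>, j + (length \<eta> - j)) \<sigma>" using a(2) by simp
  from cps_descend[OF this] show ?thesis .
qed

lemma tS_nontrig: "(X,\<eta>) \<in> G \<Longrightarrow> s \<in> set \<eta> \<Longrightarrow> \<not> is_trig trig s \<Longrightarrow> tau_sym G trig s = []"
proof (cases s)
  case (Nt Y)
  assume a: "(X,\<eta>) \<in> G" "s \<in> set \<eta>" "\<not> is_trig trig s"
  then have "Nt Y \<in> syms G" "Y \<notin> trig" using Nt by (auto simp: syms_def is_trig_def)
  then have "cps_sym G trig Y []" by (rule cps_sym_cps_prod.root)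
  then show ?thesis using Nt tS_eq by simp
qed (auto simp: tau_sym_def)

lemma CsubH: "CPS G trig \<subseteq> Hgram G trig" by (auto simp: Hgram_def)

lemma H_to_C: "cpsstr u \<Longrightarrow> derives_n (Hgram G trig) n u v \<Longrightarrow> derives_n (CPS G trig) n u v"
proof (induction n arbitrary: u)
  case 0 then show ?case by simp
next
  case (Suc n)
  from relpowp_Suc_D2[OF Suc.prems(2)] obtain x where
    s: "derive1 (Hgram G trig) u x" and r: "derives_n (Hgram G trig) n x v" by blast
  from s obtain a A \<beta> b where e: "u = a @ [A] @ b" and p: "(A, \<beta>) \<in> Hgram G trig"
    and x: "x = a @ \<beta> @ b" unfolding derive1_def by blast
  from Suc.prems(1) e have "\<exists>c Y. A = Tm c \<or> A = Hat Y" by (auto simp: cpsstr_def)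
  with p have pC: "(A, \<beta>) \<in> CPS G trig" by (auto simp: Hgram_def lift_def)
  then have "cpsstr \<beta>" by (auto simp: CPS_def dest: cps_str(2))
  with Suc.prems(1) e x have "cpsstr x" by (auto simp: cpsstr_def)
  from Suc.IH[OF this r] have "derives_n (CPS G trig) n x v" .
  moreover have "derive1 (CPS G trig) u x" unfolding derive1_def using e x pC by blast
  ultimately show ?case by (metis relpowp_Suc_I2)
qed


lemma claim1_0: "derives_n (CPS G trig) 0 [hat X] (map Tm w) \<Longrightarrow>
   derives_n (Hgram G trig) 0 (X # tau_sym G trig X) (map Tm w)"
  by (cases X) (auto simp: tau_sym_def)

lemma claim1_Suc:
  assumes c2: "\<And>X \<eta> w. (X,\<eta>) \<in> G \<Longrightarrow> derives_n (CPS G trig) m (tau_prod G trig (X,\<eta>,0)) (map Tm w)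
      \<Longrightarrow> derives_n (Hgram G trig) m (\<eta> @ tau_sym G trig (Nt X)) (map Tm w)"
    and d: "derives_n (CPS G trig) (Suc m) [hat X] (map Tm w)"
  shows "derives_n (Hgram G trig) (Suc m) (X # tau_sym G trig X) (map Tm w)"
proof (cases X)
  case (Tm a)
  then have h: "hat X = X" "tau_sym G trig X = []" by (auto simp: tau_sym_def)
  from derive1_mono[OF CsubH d] h show ?thesis by metis
next
  case (Hat Y)
  then have h: "hat X = X" "tau_sym G trig X = []" by (auto simp: tau_sym_def)
  from derive1_mono[OF CsubH d] h show ?thesis by metis
next
  case (Nt Y)
  from relpowp_Suc_D2[OF d] obtain x where
    s: "derive1 (CPS G trig) [Hat Y] x" and r: "derives_n (CPS G trig) m x (map Tm w)"
    using Nt by auto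
  from s obtain a A \<beta> b where e: "[Hat Y] = a @ [A] @ b" and p: "(A, \<beta>) \<in> CPS G trig"
    and x: "x = a @ \<beta> @ b" unfolding derive1_def by blast
  from e have "a = []" "b = []" "A = Hat Y" by (auto simp: Cons_eq_append_conv append_eq_Cons_conv)
  with p x obtain \<eta> where P: "cps_prod G trig (Y,\<eta>,0) x" by (auto simp: CPS_def)
  have inG: "(Y,\<eta>) \<in> G" using P by (rule cps_prod_inG)
  from cps_prod_sym(2)[OF P] obtain \<sigma> where "cps_sym G trig Y \<sigma>" by auto
  then have tS: "tau_sym G trig (Nt Y) = \<sigma>" by (rule tS_eq)
  have "derives_n (Hgram G trig) m (\<eta> @ \<sigma>) (map Tm w)"
    using c2[OF inG] tP_eq[OF P] r tS by simp
  moreover have "derive1 (Hgram G trig) (Nt Y # \<sigma>) (\<eta> @ \<sigma>)"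
    unfolding derive1_def Hgram_def lift_def using inG
    by (rule_tac x="[]" in exI) auto
  ultimately show ?thesis using Nt tS by (metis relpowp_Suc_I2)
qed

lemma lemA:
  assumes c1: "\<And>m X w. m \<le> n \<Longrightarrow> derives_n (CPS G trig) m [hat X] (map Tm w)
      \<Longrightarrow> derives_n (Hgram G trig) m (X # tau_sym G trig X) (map Tm w)"
  shows "(X,\<eta>) \<in> G \<Longrightarrow> length \<eta> - j = d \<Longrightarrow> j \<le> length \<eta> \<Longrightarrow> m \<le> n \<Longrightarrow>
     derives_n (CPS G trig) m (tau_prod G trig (X,\<eta>,j)) (map Tm w) \<Longrightarrow>
     derives_n (Hgram G trig) m (drop j \<eta> @ tau_sym G trig (Nt X)) (map Tm w)"
proof (induction d arbitrary: j m w)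
  case 0
  then have j: "j = length \<eta>" by simp
  have "Nt X \<in> syms G" using 0 by (auto simp: syms_def)
  from sym_exists[OF this] obtain \<sigma> where S: "cps_sym G trig X \<sigma>" by blast
  from cps_sym_cps_prod.sym_call[OF S 0(1)] have "cps_prod G trig (X,\<eta>,j) \<sigma>" using j by simp
  with tP_eq tS_eq[OF S] 0(5) j show ?case using derive1_mono[OF CsubH] by simp
next
  case (Suc d)
  note prems = Suc.prems
  have jl: "j < length \<eta>" using prems by simp
  define s where "s = \<eta> ! j"
  have dj: "drop j \<eta> = s # drop (Suc j) \<eta>" using jl by (simp add: s_def Cons_nth_drop_Suc)
  have sin: "s \<in> set \<eta>" using jl by (simp add: s_def)
  from prod_exists[OF prems(1), of "Suc j"] jl obtain \<rho> where P: "cps_prod G trig (X,\<eta>,Suc j) \<rho>" by auto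
  have IH: "\<And>m' w'. m' \<le> n \<Longrightarrow> derives_n (CPS G trig) m' \<rho> (map Tm w') \<Longrightarrow>
      derives_n (Hgram G trig) m' (drop (Suc j) \<eta> @ tau_sym G trig (Nt X)) (map Tm w')"
    using Suc.IH[of "Suc j"] prems tP_eq[OF P] jl by simp
  show ?case
  proof (cases "is_trig trig s")
    case False
    from cps_sym_cps_prod.nontrig[OF P] False have "cps_prod G trig (X,\<eta>,j) (hat s # \<rho>)"
      by (simp add: s_def)
    then have "derives_n (CPS G trig) m ([hat s] @ \<rho>) (map Tm w)" using prems(5) tP_eq by simp
    from derives_split_Tm[OF this] obtain m1 m2 w1 w2 where
      sp: "m = m1 + m2" "w = w1 @ w2" "derives_n (CPS G trig) m1 [hat s] (map Tm w1)"
        "derives_n (CPS G trig) m2 \<rho> (map Tm w2)" by blast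
    have a1: "derives_n (Hgram G trig) m1 [s] (map Tm w1)"
      using c1[OF _ sp(3)] sp(1) prems(4) tS_nontrig[OF prems(1) sin False] by simp
    have a2: "derives_n (Hgram G trig) m2 (drop (Suc j) \<eta> @ tau_sym G trig (Nt X)) (map Tm w2)"
      using IH sp prems(4) by simp
    from derives_append[OF a1 a2] show ?thesis using dj sp by simp
  next
    case True
    show ?thesis
    proof (cases "Suc j = length \<eta> \<and> s = Nt X")
      case True2: True
      have tr: "is_trig trig (\<eta> ! (Suc j - 1))" using True by (simp add: s_def)
      have l: "Suc j = length \<eta>" and e: "\<eta> ! (Suc j - 1) = Nt X" using True2 unfolding s_def by (metis diff_Suc_1)+
      have "cps_prod G trig (X,\<eta>,Suc j - 1) [Hat X]"
        by (rule cps_sym_cps_prod.self[OF P zero_less_Suc tr l e])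
      then have "cps_prod G trig (X,\<eta>,j) [Hat X]" by simp
      then have "derives_n (CPS G trig) m [hat (Nt X)] (map Tm w)" using prems(5) tP_eq by simp
      from c1[OF prems(4) this] show ?thesis using dj True2 by simp
    next
      case False
      from True obtain Y where Y: "s = Nt Y" by (auto simp: is_trig_def)
      then have Yj: "\<eta> ! j = Nt Y" by (simp add: s_def)
      have tr: "is_trig trig (\<eta> ! (Suc j - 1))" using True by (simp add: s_def)
      have ns: "\<not> (Suc j = length \<eta> \<and> \<eta> ! (Suc j - 1) = Nt X)" using False by (simp add: s_def)
      have "cps_prod G trig (X,\<eta>,Suc j - 1) [hat (\<eta> ! (Suc j - 1))]"
        by (rule cps_sym_cps_prod.trig_prod[OF P zero_less_Suc tr ns])
      then have "cps_prod G trig (X,\<eta>,j) [Hat Y]" using Yj by simp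
      then have "derives_n (CPS G trig) m [hat (Nt Y)] (map Tm w)" using prems(5) tP_eq by simp
      from c1[OF prems(4) this] have h: "derives_n (Hgram G trig) m ([Nt Y] @ tau_sym G trig (Nt Y)) (map Tm w)" by simp
      have "cps_sym G trig (nt_of (\<eta> ! (Suc j - 1))) \<rho>"
        by (rule cps_sym_cps_prod.trig_sym[OF P zero_less_Suc tr ns])
      then have "cps_sym G trig Y \<rho>" using Yj by simp
      then have tY: "tau_sym G trig (Nt Y) = \<rho>" and cs: "cpsstr \<rho>" using tS_eq cps_str(1) by auto
      from derives_split_Tm[OF h] obtain m1 m2 w1 w2 where
        sp: "m = m1 + m2" "w = w1 @ w2" "derives_n (Hgram G trig) m1 [Nt Y] (map Tm w1)"
        "derives_n (Hgram G trig) m2 (tau_sym G trig (Nt Y)) (map Tm w2)" by blast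
      have "derives_n (CPS G trig) m2 \<rho> (map Tm w2)" using H_to_C[OF cs] sp(4) tY by simp
      then have a2: "derives_n (Hgram G trig) m2 (drop (Suc j) \<eta> @ tau_sym G trig (Nt X)) (map Tm w2)"
        using IH sp prems(4) by simp
      from derives_append[OF sp(3) a2] show ?thesis using dj sp Y by simp
    qed
  qed
qed

lemma claim1_all: "derives_n (CPS G trig) n [hat X] (map Tm w) \<Longrightarrow>
   derives_n (Hgram G trig) n (X # tau_sym G trig X) (map Tm w)"
proof (induction n arbitrary: X w rule: less_induct)
  case (less n)
  show ?case
  proof (cases n)
    case 0 then show ?thesis using less.prems claim1_0 by simp
  next
    case (Suc m)
    have c1: "\<And>k X w. k \<le> m \<Longrightarrow> derives_n (CPS G trig) k [hat X] (map Tm w)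
      \<Longrightarrow> derives_n (Hgram G trig) k (X # tau_sym G trig X) (map Tm w)"
      using less.IH Suc by simp
    have c2: "\<And>X \<eta> w. (X,\<eta>) \<in> G \<Longrightarrow> derives_n (CPS G trig) m (tau_prod G trig (X,\<eta>,0)) (map Tm w)
      \<Longrightarrow> derives_n (Hgram G trig) m (\<eta> @ tau_sym G trig (Nt X)) (map Tm w)"
      using lemA[OF c1] by (metis diff_zero drop0 le_refl zero_le)
    from less.prems Suc have d: "derives_n (CPS G trig) (Suc m) [hat X] (map Tm w)" by (simp only:)
    from claim1_Suc[OF c2 d] Suc show ?thesis by (simp only:)
  qed
qed

lemma claim2_all: "(X,\<eta>) \<in> G \<Longrightarrow> j \<le> length \<eta> \<Longrightarrow>
     derives_n (CPS G trig) m (tau_prod G trig (X,\<eta>,j)) (map Tm w) \<Longrightarrow>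
     derives_n (Hgram G trig) m (drop j \<eta> @ tau_sym G trig (Nt X)) (map Tm w)"
  using lemA[of m, OF claim1_all] by (metis le_refl)

end


definition RG :: "('t,'n) prod set \<Rightarrow> nat \<Rightarrow> nat \<Rightarrow> bool" where
  "RG P k k' = (\<forall>j p. p \<in> OCC P j \<longrightarrow> k \<le> j \<and> j < k' \<and> lok (fst p) j)"
definition UQ :: "('t,'n) prod set \<Rightarrow> bool" where
  "UQ P = (\<forall>j p q. p \<in> OCC P j \<longrightarrow> q \<in> OCC P j \<longrightarrow> p = q)"
definition isF :: "('t,'n) sym \<Rightarrow> bool" where
  "isF s = (\<exists>j. s = Nt (Fresh j))"

definition INV :: "'n nt \<Rightarrow> nat \<Rightarrow> nat \<Rightarrow> ('t,'n) prod list \<Rightarrow> bool" where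
  "INV X k k' ps = (k \<le> k' \<and> RG (set ps) k k' \<and> UQ (set ps) \<and>
     (\<forall>j. Nt (Fresh j) \<in> syms (set ps) \<longrightarrow> X = Fresh j \<or> OCC (set ps) j \<noteq> {}))"

definition CINV :: "nat \<Rightarrow> nat \<Rightarrow> ('t,'n) sym list \<Rightarrow> ('t,'n) prod list \<Rightarrow> bool" where
  "CINV k k' as ps = (k \<le> k' \<and> RG (set ps) k k' \<and> UQ (set ps) \<and>
     (\<forall>j. Nt (Fresh j) \<in> syms (set ps) \<longrightarrow> Nt (Fresh j) \<in> set as \<or> OCC (set ps) j \<noteq> {}) \<and>
     (\<forall>j. Nt (Fresh j) \<in> set as \<longrightarrow> k \<le> j \<and> j < k' \<and> OCC (set ps) j = {}) \<and>
     distinct (filter isF as))"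

lemma OCC_Un: "OCC (A \<union> B) j = OCC A j \<union> OCC B j"
  by (auto simp: OCC_def)
lemma syms_Un: "syms (A \<union> B) = syms A \<union> syms B"
  by (auto simp: syms_def)
lemma syms_single: "syms {(X,\<beta>)} = {Nt X} \<union> set \<beta>"
  by (auto simp: syms_def)
lemma RG_Un: "RG (A \<union> B) k k' = (RG A k k' \<and> RG B k k')"
  unfolding RG_def OCC_Un by blast
lemma RG_mono: "RG A k1 k2 \<Longrightarrow> k0 \<le> k1 \<Longrightarrow> k2 \<le> k3 \<Longrightarrow> RG A k0 k3"
  by (fastforce simp: RG_def)
lemma UQ_Un: "RG A k1 k2 \<Longrightarrow> RG B k2 k3 \<Longrightarrow> UQ A \<Longrightarrow> UQ B \<Longrightarrow> UQ (A \<union> B)"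
proof -
  assume a: "RG A k1 k2" "RG B k2 k3" "UQ A" "UQ B"
  show ?thesis unfolding UQ_def OCC_Un
  proof (intro allI impI)
    fix j p q assume p: "p \<in> OCC A j \<union> OCC B j" and q: "q \<in> OCC A j \<union> OCC B j"
    have x: False if "x \<in> OCC A j" "y \<in> OCC B j" for x y
    proof -
      from a(1) that(1) have "j < k2" unfolding RG_def by blast
      moreover from a(2) that(2) have "k2 \<le> j" unfolding RG_def by blast
      ultimately show False by simp
    qed
    from p q a(3,4) show "p = q" unfolding UQ_def using x by blast
  qed
qed
lemma lok_mono: "lok X k \<Longrightarrow> k \<le> j \<Longrightarrow> lok X j"
  by (cases X) (auto simp: lok_def)

lemma OCC_empty_noF: "\<forall>s\<in>set \<beta>. \<not> isF s \<Longrightarrow> OCC {(X,\<beta>)} j = {}"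
  by (auto simp: OCC_def isF_def)

lemma distinct_filter_nth: "distinct (filter P xs) \<Longrightarrow> i < length xs \<Longrightarrow> i' < length xs \<Longrightarrow>
   xs!i = xs!i' \<Longrightarrow> P (xs!i) \<Longrightarrow> i = i'"
proof (induction xs arbitrary: i i')
  case Nil then show ?case by simp
next
  case (Cons x xs)
  show ?case
  proof (cases i)
    case 0
    then show ?thesis using Cons by (cases i') (auto simp: nth_mem)
  next
    case (Suc m)
    then show ?thesis using Cons
      by (cases i') (auto simp: nth_mem split: if_split_asm)
  qed
qed

lemma OCC_single: "OCC {(X,\<eta>)} j = {(X,\<eta>,i)| i. i < length \<eta> \<and> \<eta>!i = Nt (Fresh j) \<and> \<not>(Suc i = length \<eta> \<and> X = Fresh j)}"
  unfolding OCC_def by blast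

lemma OCC_star: "OCC {(X, [Nt (Fresh k), Nt X])} j = (if j = k then {(X, [Nt (Fresh k), Nt X], 0)} else {})"
proof -
  have "i < length [Nt (Fresh k), Nt X] \<and> [Nt (Fresh k), Nt X]!i = Nt (Fresh j) \<and>
        \<not>(Suc i = length [Nt (Fresh k), Nt X] \<and> X = Fresh j) \<longleftrightarrow> (i = 0 \<and> j = k)" for i
  proof (cases i)
    case 0 then show ?thesis by auto
  next
    case (Suc m) then show ?thesis by (cases m) auto
  qed
  then show ?thesis unfolding OCC_single by auto
qed


lemma noOCC: "(\<And>j. OCC P j = {}) \<Longrightarrow> RG P k k' \<and> UQ P"
  by (auto simp: RG_def UQ_def)

lemma inv_BTm: "INV X k k [(X,[Tm a])]"
  using noOCC[of "{(X,[Tm a])}"] OCC_empty_noF[of "[Tm a]" X]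
  by (auto simp: INV_def syms_single isF_def)

lemma inv_BNt: "INV X k k [(X,[Nt (Top A)])]"
  using noOCC[of "{(X,[Nt (Top A)])}"] OCC_empty_noF[of "[Nt (Top A)]" X]
  by (auto simp: INV_def syms_single isF_def)

lemma inv_opt: "INV X k k' ps \<Longrightarrow> INV X k k' (ps @ [(X,[])])"
proof -
  assume a: "INV X k k' ps"
  have e: "OCC {(X,[])} j = {}" for j by (rule OCC_empty_noF) simp
  have s: "set (ps @ [(X,[])]) = set ps \<union> {(X,[])}" by auto
  have o: "OCC (set ps \<union> {(X,[])}) j = OCC (set ps) j" for j unfolding OCC_Un e by simp
  have r: "RG (set ps \<union> {(X,[])}) k k' = RG (set ps) k k'" "UQ (set ps \<union> {(X,[])}) = UQ (set ps)"
    unfolding RG_def UQ_def o by simp_all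
  show ?thesis using a unfolding INV_def s o r syms_Un syms_single by auto
qed

lemma inv_alt_nil: "INV X k k []"
  by (auto simp: INV_def RG_def UQ_def OCC_def syms_def)

lemma inv_alt_cons: "INV X k k1 ps1 \<Longrightarrow> INV X k1 k2 ps2 \<Longrightarrow> INV X k k2 (ps1@ps2)"
proof -
  assume a: "INV X k k1 ps1" "INV X k1 k2 ps2"
  then have r: "RG (set ps1) k k1" "RG (set ps2) k1 k2" "UQ (set ps1)" "UQ (set ps2)" "k \<le> k1" "k1 \<le> k2"
    by (auto simp: INV_def)
  have "UQ (set ps1 \<union> set ps2)" by (rule UQ_Un[OF r(1-4)])
  moreover have "RG (set ps1 \<union> set ps2) k k2" unfolding RG_Un
    using RG_mono[OF r(1)] RG_mono[OF r(2)] r(5,6) by auto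
  ultimately show ?thesis using a by (auto simp: INV_def OCC_Un syms_Un)
qed

lemma cinv_nil: "CINV k k [] []"
  by (auto simp: CINV_def RG_def UQ_def OCC_def syms_def)

lemma single_sym_notF: "single_sym e = Some s \<Longrightarrow> \<not> isF s"
  by (cases e) (auto simp: isF_def)

lemma cinv_some: "single_sym e = Some s \<Longrightarrow> CINV k k' as ps \<Longrightarrow> CINV k k' (s#as) ps"
  using single_sym_notF[of e s] by (auto simp: CINV_def isF_def)

lemma cinv_none: "INV (Fresh k) (Suc k) k1 ps1 \<Longrightarrow> CINV k1 k2 as ps2 \<Longrightarrow>
    CINV k k2 (Nt (Fresh k) # as) (ps1@ps2)"
proof -
  assume a: "INV (Fresh k) (Suc k) k1 ps1" and c: "CINV k1 k2 as ps2"
  from a have a1: "Suc k \<le> k1" "RG (set ps1) (Suc k) k1" "UQ (set ps1)"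
    "\<And>j. Nt (Fresh j) \<in> syms (set ps1) \<Longrightarrow> Fresh k = Fresh j \<or> OCC (set ps1) j \<noteq> {}"
    by (auto simp: INV_def)
  from c have c1: "k1 \<le> k2" "RG (set ps2) k1 k2" "UQ (set ps2)"
    "\<And>j. Nt (Fresh j) \<in> syms (set ps2) \<Longrightarrow> Nt (Fresh j) \<in> set as \<or> OCC (set ps2) j \<noteq> {}"
    "\<And>j. Nt (Fresh j) \<in> set as \<Longrightarrow> k1 \<le> j \<and> j < k2 \<and> OCC (set ps2) j = {}"
    "distinct (filter isF as)"
    by (auto simp: CINV_def)
  have s: "set (ps1 @ ps2) = set ps1 \<union> set ps2" by simp
  have uq: "UQ (set ps1 \<union> set ps2)" by (rule UQ_Un[OF a1(2) c1(2) a1(3) c1(3)])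
  have rg: "RG (set ps1 \<union> set ps2) k k2" unfolding RG_Un
    using RG_mono[OF a1(2), of k k2] RG_mono[OF c1(2), of k k2] a1(1) c1(1) by auto
  have o1: "OCC (set ps1) j = {}" if "j < Suc k \<or> k1 \<le> j" for j
    using a1(2) that unfolding RG_def by force
  have o2: "OCC (set ps2) j = {}" if "j < k1" for j
    using c1(2) that unfolding RG_def by force
  have nk: "Nt (Fresh k) \<notin> set as" using c1(5)[of k] a1(1) by auto
  have f4: "\<forall>j. Nt (Fresh j) \<in> syms (set ps1 \<union> set ps2) \<longrightarrow> Nt (Fresh j) \<in> set (Nt (Fresh k) # as) \<or> OCC (set ps1 \<union> set ps2) j \<noteq> {}"
      unfolding syms_Un OCC_Un using a1(4) c1(4) by auto
  have f5: "\<forall>j. Nt (Fresh j) \<in> set (Nt (Fresh k) # as) \<longrightarrow> k \<le> j \<and> j < k2 \<and> OCC (set ps1 \<union> set ps2) j = {}"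
  proof (intro allI impI)
    fix j assume j: "Nt (Fresh j) \<in> set (Nt (Fresh k) # as)"
    then have "j = k \<or> Nt (Fresh j) \<in> set as" by auto
    then show "k \<le> j \<and> j < k2 \<and> OCC (set ps1 \<union> set ps2) j = {}"
    proof
      assume "j = k"
      then show ?thesis using o1[of j] o2[of j] a1(1) c1(1) unfolding OCC_Un by auto
    next
      assume "Nt (Fresh j) \<in> set as"
      from c1(5)[OF this] show ?thesis using o1[of j] a1(1) unfolding OCC_Un by auto
    qed
  qed
  have f6: "distinct (filter isF (Nt (Fresh k) # as))" using c1(6) nk by (auto simp: isF_def)
  have f1: "k \<le> k2" using a1(1) c1(1) by simp
  show ?thesis unfolding CINV_def s using f1 rg uq f4 f5 f6 by blast
qed

lemma inv_conc: "lok X k \<Longrightarrow> CINV k k' as ps \<Longrightarrow> INV X k k' (ps @ [(X,as)])"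
proof -
  assume l: "lok X k" and c: "CINV k k' as ps"
  from c have c1: "k \<le> k'" "RG (set ps) k k'" "UQ (set ps)"
    "\<And>j. Nt (Fresh j) \<in> syms (set ps) \<Longrightarrow> Nt (Fresh j) \<in> set as \<or> OCC (set ps) j \<noteq> {}"
    "\<And>j. Nt (Fresh j) \<in> set as \<Longrightarrow> k \<le> j \<and> j < k' \<and> OCC (set ps) j = {}"
    "distinct (filter isF as)"
    by (auto simp: CINV_def)
  have s: "set (ps @ [(X,as)]) = set ps \<union> {(X,as)}" by auto
  have oS: "\<exists>i. p = (X,as,i) \<and> i < length as \<and> as!i = Nt (Fresh j)" if "p \<in> OCC {(X,as)} j" for p j
    using that unfolding OCC_single by blast
  have inS: "Nt (Fresh j) \<in> set as" if "p \<in> OCC {(X,as)} j" for p j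
    using oS[OF that] by (auto simp: in_set_conv_nth)
  have rgS: "RG {(X,as)} k k'" unfolding RG_def
  proof (intro allI impI)
    fix j p assume p: "p \<in> OCC {(X,as)} j"
    from c1(5)[OF inS[OF p]] have "k \<le> j" "j < k'" by auto
    moreover from oS[OF p] have "fst p = X" by auto
    ultimately show "k \<le> j \<and> j < k' \<and> lok (fst p) j" using lok_mono[OF l] by auto
  qed
  have uq: "UQ (set ps \<union> {(X,as)})" unfolding UQ_def OCC_Un
  proof (intro allI impI)
    fix j p q assume p: "p \<in> OCC (set ps) j \<union> OCC {(X,as)} j" and q: "q \<in> OCC (set ps) j \<union> OCC {(X,as)} j"
    show "p = q"
    proof (cases "OCC {(X,as)} j = {}")
      case True
      then show ?thesis using p q c1(3) unfolding UQ_def by blast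
    next
      case False
      then obtain r where "r \<in> OCC {(X,as)} j" by auto
      from c1(5)[OF inS[OF this]] have "OCC (set ps) j = {}" by auto
      with p q have p': "p \<in> OCC {(X,as)} j" and q': "q \<in> OCC {(X,as)} j" by auto
      from oS[OF p'] obtain i where pi: "p = (X,as,i)" "i < length as" "as!i = Nt (Fresh j)" by blast
      from oS[OF q'] obtain i' where qi: "q = (X,as,i')" "i' < length as" "as!i' = Nt (Fresh j)" by blast
      have "i = i'" by (rule distinct_filter_nth[OF c1(6) pi(2) qi(2)]) (use pi qi in \<open>auto simp: isF_def\<close>)
      then show ?thesis using pi qi by simp
    qed
  qed
  have rg: "RG (set ps \<union> {(X,as)}) k k'" unfolding RG_Un using c1(2) rgS by simp
  have f4: "\<forall>j. Nt (Fresh j) \<in> syms (set ps \<union> {(X,as)}) \<longrightarrow> X = Fresh j \<or> OCC (set ps \<union> {(X,as)}) j \<noteq> {}"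
  proof (intro allI impI)
    fix j assume "Nt (Fresh j) \<in> syms (set ps \<union> {(X,as)})"
    then have h: "Nt (Fresh j) \<in> syms (set ps) \<or> X = Fresh j \<or> Nt (Fresh j) \<in> set as"
      unfolding syms_Un syms_single by auto
    have "Nt (Fresh j) \<in> set as \<Longrightarrow> X = Fresh j \<or> OCC {(X,as)} j \<noteq> {}"
    proof -
      assume "Nt (Fresh j) \<in> set as"
      then obtain i where "i < length as" "as!i = Nt (Fresh j)" by (auto simp: in_set_conv_nth)
      then show ?thesis unfolding OCC_single by blast
    qed
    with h c1(4)[of j] show "X = Fresh j \<or> OCC (set ps \<union> {(X,as)}) j \<noteq> {}"
      unfolding OCC_Un by blast
  qed
  show ?thesis unfolding INV_def s using c1(1) rg uq f4 by blast
qed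

lemma inv_star:
  fixes ps :: "('t,'n) prod list"
  shows "lok X k \<Longrightarrow> INV (Fresh k) (Suc k) k' ps \<Longrightarrow>
   INV X k k' (ps @ [(X,[Nt (Fresh k), Nt X]), (X,[])])"
proof -
  assume l: "lok X k" and a: "INV (Fresh k) (Suc k) k' ps"
  from a have a1: "Suc k \<le> k'" "RG (set ps) (Suc k) k'" "UQ (set ps)"
    "\<And>j. Nt (Fresh j) \<in> syms (set ps) \<Longrightarrow> Fresh k = Fresh j \<or> OCC (set ps) j \<noteq> {}"
    by (auto simp: INV_def)
  define S :: "('t,'n) prod set" where "S = {(X,[Nt (Fresh k), Nt X])}"
  have e: "OCC {(X,[])} j = {}" for j by (rule OCC_empty_noF) simp
  have s: "set (ps @ [(X,[Nt (Fresh k), Nt X]), (X,[])]) = (set ps \<union> S) \<union> {(X,[])}"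
    by (auto simp: S_def)
  have o: "OCC ((set ps \<union> S) \<union> {(X,[])}) j = OCC (set ps) j \<union> OCC S j" for j
    unfolding OCC_Un e by simp
  have oS: "OCC S j = (if j = k then {(X, [Nt (Fresh k), Nt X], 0)} else {})" for j
    unfolding S_def by (rule OCC_star)
  have o1: "OCC (set ps) k = {}" using a1(2) unfolding RG_def by force
  have rg: "RG (set ps \<union> S) k k'" unfolding RG_Un
  proof
    show "RG (set ps) k k'" using RG_mono[OF a1(2)] by simp
    show "RG S k k'" unfolding RG_def oS using l a1(1) by auto
  qed
  have uq: "UQ (set ps \<union> S)" unfolding UQ_def OCC_Un
  proof (intro allI impI)
    fix j p q assume p: "p \<in> OCC (set ps) j \<union> OCC S j" and q: "q \<in> OCC (set ps) j \<union> OCC S j"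
    show "p = q"
    proof (cases "j = k")
      case True
      then show ?thesis using p q o1 oS by auto
    next
      case False
      then have "p \<in> OCC (set ps) j" "q \<in> OCC (set ps) j" using p q oS[of j] by auto
      then show ?thesis using a1(3) unfolding UQ_def by blast
    qed
  qed
  have f4: "\<forall>j. Nt (Fresh j) \<in> syms (set ps \<union> S \<union> {(X,[])}) \<longrightarrow> X = Fresh j \<or> OCC (set ps) j \<union> OCC S j \<noteq> {}"
  proof (intro allI impI)
    fix j assume "Nt (Fresh j) \<in> syms (set ps \<union> S \<union> {(X,[])})"
    then have "Nt (Fresh j) \<in> syms (set ps) \<or> X = Fresh j \<or> j = k"
      unfolding syms_Un syms_single S_def by auto
    then show "X = Fresh j \<or> OCC (set ps) j \<union> OCC S j \<noteq> {}"
      using a1(4)[of j] oS[of j] by auto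
  qed
  have rg2: "RG (set ps \<union> S \<union> {(X,[])}) k k' = RG (set ps \<union> S) k k'"
    "UQ (set ps \<union> S \<union> {(X,[])}) = UQ (set ps \<union> S)"
    unfolding RG_def UQ_def OCC_Un e Un_empty_right by (rule refl)+
  show ?thesis unfolding INV_def s rg2 o using a1(1) rg uq f4 by auto
qed

lemma flat_inv:
  fixes X :: "'n nt" and e :: "('t,'n) bexp" and es es' :: "('t,'n) bexp list"
  shows "\<forall>ps k'. lok X k \<longrightarrow> flat X e k = (ps,k') \<longrightarrow> INV X k k' ps"
  "\<forall>as ps k'. flat_conc es k = (as,ps,k') \<longrightarrow> CINV k k' as ps"
  "\<forall>ps k'. lok X k \<longrightarrow> flat_alt X es' k = (ps,k') \<longrightarrow> INV X k k' ps"
proof (induction X e k and es k and X es' k rule: flat_flat_conc_flat_alt.induct)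
  case (1 X a k) then show ?case using inv_BTm by auto
next
  case (2 X A k) then show ?case using inv_BNt by auto
next
  case (3 X es k) then show ?case using inv_conc by (auto split: prod.splits)
next
  case (4 X es k) then show ?case by auto
next
  case (5 X e k) then show ?case using inv_opt by (auto split: prod.splits)
next
  case (6 X e k)
  have l: "lok (Fresh k) (Suc k)" by (simp add: lok_def)
  show ?case
  proof (intro allI impI)
    fix ps k' assume lX: "lok X k" and f: "flat X (Star e) k = (ps, k')"
    obtain ps0 k0 where f0: "flat (Fresh k) e (Suc k) = (ps0,k0)" by fastforce
    with f have "ps = ps0 @ [(X,[Nt (Fresh k), Nt X]), (X,[])]" "k' = k0" by auto
    with 6 l f0 inv_star[OF lX] show "INV X k k' ps" by auto
  qed
next
  case (7 k) then show ?case using cinv_nil by auto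
next
  case (8 e es k)
  show ?case
  proof (intro allI impI)
    fix as ps k' assume f: "flat_conc (e # es) k = (as, ps, k')"
    show "CINV k k' as ps"
    proof (cases "single_sym e")
      case (Some s)
      obtain as0 ps0 k0 where f0: "flat_conc es k = (as0,ps0,k0)" by (cases "flat_conc es k") auto
      with f Some have "as = s # as0" "ps = ps0" "k' = k0" by auto
      with 8(3)[OF Some] f0 cinv_some[OF Some] show ?thesis by auto
    next
      case None
      obtain ps1 k1 where f1: "flat (Fresh k) e (Suc k) = (ps1,k1)" by fastforce
      obtain as0 ps2 k2 where f2: "flat_conc es k1 = (as0,ps2,k2)" by (cases "flat_conc es k1") auto
      with f None f1 have e: "as = Nt (Fresh k) # as0" "ps = ps1 @ ps2" "k' = k2" by auto
      have i1: "INV (Fresh k) (Suc k) k1 ps1" using 8(1)[OF None] f1 by (auto simp: lok_def)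
      have i2: "CINV k1 k2 as0 ps2" using 8(2)[OF None f1[symmetric]] f2 by auto
      show ?thesis using cinv_none[OF i1 i2] e by simp
    qed
  qed
next
  case (9 X k) then show ?case using inv_alt_nil by auto
next
  case (10 X e es k)
  show ?case
  proof (intro allI impI)
    fix ps k' assume lX: "lok X k" and f: "flat_alt X (e # es) k = (ps, k')"
    obtain ps1 k1 where f1: "flat X e k = (ps1,k1)" by fastforce
    obtain ps2 k2 where f2: "flat_alt X es k1 = (ps2,k2)" by fastforce
    with f f1 have e: "ps = ps1 @ ps2" "k' = k2" by auto
    have i1: "INV X k k1 ps1" using 10(1) lX f1 by auto
    then have "k \<le> k1" by (simp add: INV_def)
    then have "lok X k1" using lok_mono[OF lX] by simp
    then have i2: "INV X k1 k2 ps2" using 10(2)[OF f1[symmetric]] f2 by auto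
    show "INV X k k' ps" using inv_alt_cons[OF i1 i2] e by simp
  qed
qed

definition FINV :: "nat \<Rightarrow> nat \<Rightarrow> ('t,'n) prod list \<Rightarrow> bool" where
  "FINV k k' ps = (k \<le> k' \<and> RG (set ps) k k' \<and> UQ (set ps) \<and>
     (\<forall>j. Nt (Fresh j) \<in> syms (set ps) \<longrightarrow> OCC (set ps) j \<noteq> {}))"

lemma flat_rules_inv: "flat_rules rs k = (ps,k') \<Longrightarrow> FINV k k' ps"
proof (induction rs k arbitrary: ps k' rule: flat_rules.induct)
  case (1 k) then show ?case by (auto simp: FINV_def RG_def UQ_def OCC_def syms_def)
next
  case (2 A e rs k)
  obtain ps1 k1 where f1: "flat (Top A) e k = (ps1,k1)" by fastforce
  obtain ps2 k2 where f2: "flat_rules rs k1 = (ps2,k2)" by fastforce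
  from 2(2) f1 f2 have e: "ps = ps1 @ ps2" "k' = k2" by auto
  have i1: "INV (Top A) k k1 ps1" using flat_inv(1)[of "Top A" k e] f1 by (auto simp: lok_def)
  have i2: "FINV k1 k2 ps2" using 2(1)[OF f1[symmetric]] f2 by auto
  from i1 i2 have r: "RG (set ps1) k k1" "RG (set ps2) k1 k2" "UQ (set ps1)" "UQ (set ps2)" "k \<le> k1" "k1 \<le> k2"
    by (auto simp: INV_def FINV_def)
  have "UQ (set ps1 \<union> set ps2)" by (rule UQ_Un[OF r(1-4)])
  moreover have "RG (set ps1 \<union> set ps2) k k2" unfolding RG_Un
    using RG_mono[OF r(1)] RG_mono[OF r(2)] r(5,6) by auto
  ultimately show ?case using i1 i2 e by (auto simp: INV_def FINV_def OCC_Un syms_Un)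
qed


theorem mainTheorem2:
  fixes rs :: "('n \<times> ('t,'n) bexp) list"
    and G :: "('t,'n) prod set"
    and trig :: "'n nt set"
    and w :: "'t list"
  assumes G_def: "G = flat_grammar rs"
    and trig_sub: "trig \<subseteq> cps_eligible G"
  shows "(\<forall>X n. X \<in> syms G \<longrightarrow> derives_n (CPS G trig) n [hat X] (map Tm w)
             \<longrightarrow> derives_n (Hgram G trig) n (X # tau_sym G trig X) (map Tm w))
       \<and> (\<forall>X \<eta> j n. (X, \<eta>) \<in> G \<longrightarrow> j \<le> length \<eta> \<longrightarrow>
             derives_n (CPS G trig) n (tau_prod G trig (X, \<eta>, j)) (map Tm w)
             \<longrightarrow> derives_n (Hgram G trig) n (drop j \<eta> @ tau_sym G trig (Nt X)) (map Tm w))"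
proof -
  obtain ps k' where f: "flat_rules rs 0 = (ps, k')" by fastforce
  have G: "G = set ps" using G_def f by (simp add: flat_grammar_def)
  have fi: "FINV 0 k' ps" by (rule flat_rules_inv[OF f])
  have uq: "\<And>j p q. p \<in> OCC G j \<Longrightarrow> q \<in> OCC G j \<Longrightarrow> p = q"
    using fi G unfolding FINV_def UQ_def by blast
  have ex: "\<And>j. Nt (Fresh j) \<in> syms G \<Longrightarrow> \<exists>p \<in> OCC G j. lok (fst p) j"
  proof -
    fix j assume "Nt (Fresh j) \<in> syms G"
    with fi G obtain p where p: "p \<in> OCC G j" unfolding FINV_def by blast
    with fi G have "lok (fst p) j" unfolding FINV_def RG_def by blast
    with p show "\<exists>p \<in> OCC G j. lok (fst p) j" by blast
  qed
  have A: "derives_n (Hgram G trig) n (X # tau_sym G trig X) (map Tm w)"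
    if "derives_n (CPS G trig) n [hat X] (map Tm w)" for X n
    by (rule claim1_all[where G=G and trig=trig]) (use uq ex trig_sub that in \<open>blast+\<close>)
  have B: "derives_n (Hgram G trig) n (drop j \<eta> @ tau_sym G trig (Nt X)) (map Tm w)"
    if "(X, \<eta>) \<in> G" "j \<le> length \<eta>" "derives_n (CPS G trig) n (tau_prod G trig (X, \<eta>, j)) (map Tm w)"
    for X \<eta> j n
    by (rule claim2_all[where G=G and trig=trig]) (use uq ex trig_sub that in \<open>blast+\<close>)
  show ?thesis using A B by blast
qed

end
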